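(* Let $A$ be a real $n\times n$ matrix, $\alpha>0$, and $F_{A,\alpha}(u)=|u|^\alpha Au$ for $u\in\mathbb R^n$. (i) If there exists $\lambda>0$ with $\|A-\lambda I_n\|_{\mathrm{op}}\le\frac{\lambda}{1+\alpha}$, then $F_{A,\alpha}$ is monotone. (ii) If there exists $\lambda>0$ with $\|A-\lambda I_n\|_{\mathrm{op}}<\frac{\lambda}{1+\alpha}$, then $F_{A,\alpha}$ is $(\alpha+2)$-monotone.
   Context: $|\cdot|$ is the Euclidean norm, $\|A\|_{\mathrm{op}}=\max_{|x|=1}|Ax|$. A map $F:\mathbb R^n\to\mathbb R^n$ is monotone if $(F(u)-F(v))\cdot(u-v)\ge0$ for all $u,v$; for $\beta>0$ it is $\beta$-monotone if there is $C>0$ with $(F(u)-F(v))\cdot(u-v)\ge C|u-v|^\beta$ for all $u,v$. *)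

theory Defs
  imports "HOL-Analysis.Analysis"
begin

definition monotone_map :: "(real^'n \<Rightarrow> real^'n) \<Rightarrow> bool" where
  "monotone_map F \<longleftrightarrow> (\<forall>u v. (F u - F v) \<bullet> (u - v) \<ge> 0)"

definition beta_monotone :: "real \<Rightarrow> (real^'n \<Rightarrow> real^'n) \<Rightarrow> bool" where
  "beta_monotone \<beta> F \<longleftrightarrow> (\<exists>C>0. \<forall>u v. (F u - F v) \<bullet> (u - v) \<ge> C * norm (u - v) powr \<beta>)"

definition op_norm :: "real^'n^'n \<Rightarrow> real" where
  "op_norm A = onorm (\<lambda>x. A *v x)"

definition F_map :: "real^'n^'n \<Rightarrow> real \<Rightarrow> real^'n \<Rightarrow> real^'n" where
  "F_map A \<alpha> u = (norm u powr \<alpha>) *\<^sub>R (A *v u)"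

end

theory Submission
  imports Defs
begin

lemma scal:
  fixes a b al :: real
  assumes b0: "0 \<le> b" and ba: "b \<le> a" and al: "al > 0"
  shows "(a powr al - b powr al) * (a*b) \<le> al * (a powr al + b powr al) * ((a+b)*(a-b))"
proof (cases "b = 0 \<or> a = b")
  case True
  then show ?thesis using assms by (auto intro!: mult_nonneg_nonneg)
next
  case False
  then have b0: "0 < b" and ba: "b < a" using assms by auto
  have "\<exists>z. b < z \<and> z < a \<and> a powr al - b powr al = (a - b) * (al * z powr (al - 1))"
    using b0 ba by (intro MVT2) (auto intro!: has_real_derivative_powr)
  then obtain z where z: "b < z" "z < a" "a powr al - b powr al = (a - b) * (al * z powr (al - 1))"
    by blast
  have key: "z powr (al - 1) * (a*b) \<le> (a powr al + b powr al) * (a+b)"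
  proof (cases "al \<ge> 1")
    case True
    have "z powr (al - 1) \<le> a powr (al - 1)" using z True b0 by (intro powr_mono2) auto
    hence "z powr (al - 1) * (a*b) \<le> a powr (al - 1) * a * b" using b0 ba
      by (simp add: mult.assoc mult_right_mono)
    also have "a powr (al - 1) * a = a powr al" using b0 ba by (simp add: powr_diff)
    also have "a powr al * b \<le> (a powr al + b powr al) * (a+b)" using b0 ba
      by (smt (verit) mult_left_mono mult_right_mono powr_ge_zero distrib_left distrib_right)
    finally show ?thesis .
  next
    case False
    have "z powr (al - 1) \<le> b powr (al - 1)" using z False b0 by (intro powr_mono2') auto
    hence "z powr (al - 1) * (a*b) \<le> b powr (al - 1) * b * a" using b0 ba
      by (simp add: mult.commute mult.left_commute mult_right_mono)
    also have "b powr (al - 1) * b = b powr al" using b0 by (simp add: powr_diff)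
    also have "b powr al * a \<le> (a powr al + b powr al) * (a+b)" using b0 ba
      by (smt (verit) mult_left_mono mult_right_mono powr_ge_zero distrib_left distrib_right)
    finally show ?thesis .
  qed
  have "(a powr al - b powr al) * (a*b) = al * (a - b) * (z powr (al - 1) * (a*b))"
    using z(3) by simp
  also have "\<dots> \<le> al * (a - b) * ((a powr al + b powr al) * (a+b))"
    using key al ba by (intro mult_left_mono) auto
  finally show ?thesis by (simp add: algebra_simps)
qed
lemma poly:
  fixes a b c p q al :: real
  assumes "0 \<le> b" "b \<le> a" "c \<le> a*b" "- (a*b) \<le> c" "0 \<le> q" "q \<le> p" "al > 0"
    and S: "(p-q)*(a*b) \<le> al*(p+q)*((a+b)*(a-b))"
  defines "WD \<equiv> p*a^2 + q*b^2 - (p+q)*c" and "X \<equiv> a^2+b^2-2*c"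
    and "WW \<equiv> p^2*a^2+q^2*b^2-2*p*q*c"
  shows "WD \<ge> (p+q)/2 * X" "0 \<le> X" "WW * X \<le> ((1+al)*WD)^2"
proof -
  define y where "y = a*b - c"
  have y0: "y \<ge> 0" using assms by (simp add: y_def)
  have X2y: "X \<ge> 2*y" unfolding X_def y_def using sum_squares_bound[of a b] by (simp add: algebra_simps power2_eq_square)
  define K where "K = (p-q)*(a^2-b^2)"
  define m where "m = p+q"
  have K0: "K \<ge> 0" unfolding K_def using assms by (intro mult_nonneg_nonneg) (auto simp: power_mono)
  have m0: "m \<ge> 0" using assms by (simp add: m_def)
  have WDe: "2*WD = m*X + K" unfolding WD_def m_def X_def K_def by (simp add: algebra_simps power2_eq_square)
  show "WD \<ge> (p+q)/2 * X" using WDe K0 m_def by simp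
  show X0: "0 \<le> X" using X2y y0 by simp
  have "(m*X - K)^2 \<ge> 0" by simp
  hence "(2*WD)^2 \<ge> 4*(m*X)*K" unfolding WDe by (simp add: power2_eq_square algebra_simps)
  hence "WD^2 \<ge> m*X*K" by (simp add: power2_eq_square algebra_simps)
  moreover have "m*X*K \<ge> m*(2*y)*K" using m0 K0 X2y
    by (intro mult_right_mono mult_left_mono) auto
  ultimately have WD2: "WD^2 \<ge> 2*y*(p+q)*(p-q)*(a^2-b^2)" by (simp add: m_def K_def algebra_simps)
  have idt: "WW*X = WD^2 + (p-q)^2*(a^2*b^2-c^2)" unfolding WW_def X_def WD_def
    by (simp add: algebra_simps power2_eq_square)
  have "(p-q)^2*(a^2*b^2-c^2) = (p-q)^2 * y * (a*b+c)" by (simp add: y_def algebra_simps power2_eq_square)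
  also have "\<dots> \<le> (p-q)^2 * y * (2*(a*b))" using assms y0 by (intro mult_left_mono) auto
  also have "\<dots> = 2*y*(p-q)*((p-q)*(a*b))" by (simp add: power2_eq_square algebra_simps)
  also have "\<dots> \<le> 2*y*(p-q)*(al*(p+q)*((a+b)*(a-b)))" using S y0 assms by (intro mult_left_mono) auto
  also have "\<dots> = al*(2*y*(p+q)*(p-q)*(a^2-b^2))" by (simp add: power2_eq_square algebra_simps)
  also have "\<dots> \<le> al*WD^2" using WD2 assms by (intro mult_left_mono) auto
  finally have "WW*X \<le> (1+al)*WD^2" using idt by (simp add: algebra_simps)
  also have "\<dots> \<le> (1+al)^2*WD^2" using assms by (intro mult_right_mono) (auto simp: power2_eq_square)
  finally show "WW * X \<le> ((1+al)*WD)^2" by (simp add: power_mult_distrib)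
qed

lemma vec0:
  fixes u v :: "real^'n" and al :: real
  assumes al: "al > 0" and ba: "norm v \<le> norm u"
  defines "W \<equiv> (norm u powr al) *\<^sub>R u - (norm v powr al) *\<^sub>R v"
  shows "norm W * norm (u - v) \<le> (1+al) * (W \<bullet> (u - v))"
    "W \<bullet> (u - v) \<ge> (norm u powr al + norm v powr al)/2 * (norm (u - v))^2"
proof -
  define a where "a = norm u"
  define b where "b = norm v"
  define p where "p = a powr al"
  define q where "q = b powr al"
  define c where "c = u \<bullet> v"
  have cs: "\<bar>c\<bar> \<le> a*b" unfolding c_def a_def b_def by (rule Cauchy_Schwarz_ineq2)
  have b0: "0 \<le> b" by (simp add: b_def)
  have ba': "b \<le> a" using ba by (simp add: a_def b_def)
  have q0: "0 \<le> q" by (simp add: q_def)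
  have qp: "q \<le> p" unfolding p_def q_def using b0 ba' al by (intro powr_mono2) auto
  have S: "(p-q)*(a*b) \<le> al*(p+q)*((a+b)*(a-b))" unfolding p_def q_def by (rule scal[OF b0 ba' al])
  have P: "p*a^2 + q*b^2 - (p+q)*c \<ge> (p+q)/2 * (a^2+b^2-2*c)" "0 \<le> a^2+b^2-2*c"
    "(p^2*a^2+q^2*b^2-2*p*q*c) * (a^2+b^2-2*c) \<le> ((1+al)*(p*a^2 + q*b^2 - (p+q)*c))^2"
    using poly[OF b0 ba' _ _ q0 qp al S] cs by auto
  have uu: "u \<bullet> u = a^2" by (simp add: a_def power2_norm_eq_inner)
  have vv: "v \<bullet> v = b^2" by (simp add: b_def power2_norm_eq_inner)
  have vu: "v \<bullet> u = c" by (simp add: c_def inner_commute)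
  have WD: "W \<bullet> (u - v) = p*a^2 + q*b^2 - (p+q)*c"
    unfolding W_def p_def[symmetric] q_def[symmetric] a_def[symmetric] b_def[symmetric]
    by (simp add: inner_diff_left inner_diff_right uu vv vu c_def[symmetric] algebra_simps)
  have DD: "(norm (u - v))^2 = a^2+b^2-2*c"
    by (simp add: power2_norm_eq_inner inner_diff_left inner_diff_right uu vv vu c_def[symmetric] algebra_simps)
  have WW: "(norm W)^2 = p^2*a^2+q^2*b^2-2*p*q*c"
    unfolding W_def p_def[symmetric] q_def[symmetric] a_def[symmetric] b_def[symmetric]
    apply (simp only: power2_norm_eq_inner)
    by (simp add: inner_diff_left inner_diff_right uu vv vu c_def[symmetric] algebra_simps power2_eq_square)
  show "W \<bullet> (u - v) \<ge> (norm u powr al + norm v powr al)/2 * (norm (u - v))^2"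
    using P(1) WD DD by (simp add: p_def q_def a_def b_def)
  have WD0: "0 \<le> W \<bullet> (u - v)" using P(1,2) WD q0 qp by (smt (verit) mult_nonneg_nonneg divide_nonneg_nonneg)
  have "(norm W * norm (u - v))^2 \<le> ((1+al) * (W \<bullet> (u - v)))^2"
    using P(3) WD DD WW by (simp add: power_mult_distrib)
  then show "norm W * norm (u - v) \<le> (1+al) * (W \<bullet> (u - v))"
    by (rule power2_le_imp_le) (use WD0 al in simp)
qed

lemma vec:
  fixes u v :: "real^'n" and al :: real
  assumes al: "al > 0"
  shows "norm ((norm u powr al) *\<^sub>R u - (norm v powr al) *\<^sub>R v) * norm (u - v) \<le> (1+al) * (((norm u powr al) *\<^sub>R u - (norm v powr al) *\<^sub>R v) \<bullet> (u - v))
    \<and> ((norm u powr al) *\<^sub>R u - (norm v powr al) *\<^sub>R v) \<bullet> (u - v) \<ge> (norm u powr al + norm v powr al)/2 * (norm (u - v))^2"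
proof (cases "norm v \<le> norm u")
  case True
  then show ?thesis using vec0[OF al True] by auto
next
  case False
  hence F: "norm u \<le> norm v" by simp
  have e1: "norm ((norm u powr al) *\<^sub>R u - (norm v powr al) *\<^sub>R v) = norm ((norm v powr al) *\<^sub>R v - (norm u powr al) *\<^sub>R u)" by (rule norm_minus_commute)
  have e2: "((norm u powr al) *\<^sub>R u - (norm v powr al) *\<^sub>R v) \<bullet> (u - v) = ((norm v powr al) *\<^sub>R v - (norm u powr al) *\<^sub>R u) \<bullet> (v - u)"
    by (metis inner_minus_left inner_minus_right minus_diff_eq minus_minus)
  have n: "norm (u - v) = norm (v - u)" by (simp add: norm_minus_commute)
  show ?thesis
    using vec0[OF al F] unfolding e1 e2 n by (auto simp: add.commute)
qed

lemma main_ineq: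
  fixes A :: "real^'n^'n" and al lam :: real and u v :: "real^'n"
  assumes al: "al > 0"
  shows "(F_map A al u - F_map A al v) \<bullet> (u - v) \<ge>
     (lam - op_norm (A - lam *\<^sub>R mat 1) * (1+al)) * (((norm u powr al) *\<^sub>R u - (norm v powr al) *\<^sub>R v) \<bullet> (u - v))"
proof -
  define W where "W = (norm u powr al) *\<^sub>R u - (norm v powr al) *\<^sub>R v"
  define B where "B = A - lam *\<^sub>R mat 1"
  define nB where "nB = op_norm B"
  have V: "norm W * norm (u - v) \<le> (1+al) * (W \<bullet> (u - v))" using vec[OF al, of u v] by (simp add: W_def)
  have nB0: "0 \<le> nB" unfolding nB_def op_norm_def by (rule onorm_pos_le) simp
  have nBW: "norm (B *v W) \<le> nB * norm W" unfolding nB_def op_norm_def by (rule onorm) simp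
  have FW: "F_map A al u - F_map A al v = A *v W"
    by (simp add: F_map_def W_def matrix_vector_mult_scaleR matrix_vector_mult_diff_distrib)
  have AB: "A = B + lam *\<^sub>R mat 1" by (simp add: B_def)
  have AW: "A *v W = B *v W + lam *\<^sub>R W"
    by (subst AB) (simp add: matrix_vector_mult_add_rdistrib scaleR_matrix_vector_assoc[symmetric])
  have "(B *v W) \<bullet> (u - v) \<ge> - (norm (B *v W) * norm (u - v))"
    using Cauchy_Schwarz_ineq2[of "B *v W" "u - v"] by linarith
  moreover have "norm (B *v W) * norm (u - v) \<le> nB * norm W * norm (u - v)"
    using nBW by (simp add: mult_right_mono)
  moreover have "nB * norm W * norm (u - v) \<le> nB * ((1+al) * (W \<bullet> (u - v)))"
    using V nB0 by (simp add: mult.assoc mult_left_mono)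
  ultimately have "(B *v W) \<bullet> (u - v) \<ge> - (nB * (1+al) * (W \<bullet> (u - v)))" by (simp add: mult.assoc)
  then show ?thesis unfolding FW AW W_def[symmetric] B_def[symmetric] nB_def[symmetric]
    by (simp add: inner_add_left algebra_simps)
qed

theorem mainTheorem11:
  fixes A :: "real^'n^'n" and \<alpha> :: real
  assumes "\<alpha> > 0"
  shows "((\<exists>lam>0. op_norm (A - lam *\<^sub>R mat 1) \<le> lam / (1 + \<alpha>)) \<longrightarrow> monotone_map (F_map A \<alpha>))
       \<and> ((\<exists>lam>0. op_norm (A - lam *\<^sub>R mat 1) < lam / (1 + \<alpha>)) \<longrightarrow> beta_monotone (\<alpha> + 2) (F_map A \<alpha>))"
proof (intro conjI impI)
  assume "\<exists>lam>0. op_norm (A - lam *\<^sub>R mat 1) \<le> lam / (1 + \<alpha>)"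
  then obtain lam where lam: "lam > 0" "op_norm (A - lam *\<^sub>R mat 1) \<le> lam / (1 + \<alpha>)" by blast
  have e: "0 \<le> lam - op_norm (A - lam *\<^sub>R mat 1) * (1+\<alpha>)"
    using lam assms by (simp add: field_simps)
  show "monotone_map (F_map A \<alpha>)" unfolding monotone_map_def
  proof (intro allI)
    fix u v :: "real^'n"
    have WD: "0 \<le> ((norm u powr \<alpha>) *\<^sub>R u - (norm v powr \<alpha>) *\<^sub>R v) \<bullet> (u - v)"
    proof -
      have "0 \<le> (norm u powr \<alpha> + norm v powr \<alpha>)/2 * (norm (u - v))^2" by simp
      then show ?thesis using vec[OF assms, of u v] by linarith
    qed
    show "0 \<le> (F_map A \<alpha> u - F_map A \<alpha> v) \<bullet> (u - v)"
      using main_ineq[where A=A and al=\<alpha> and lam=lam and u=u and v=v, OF assms] mult_nonneg_nonneg[OF e WD] by linarith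
  qed
next
  assume "\<exists>lam>0. op_norm (A - lam *\<^sub>R mat 1) < lam / (1 + \<alpha>)"
  then obtain lam where lam: "lam > 0" "op_norm (A - lam *\<^sub>R mat 1) < lam / (1 + \<alpha>)" by blast
  define e where "e = lam - op_norm (A - lam *\<^sub>R mat 1) * (1+\<alpha>)"
  have e0: "0 < e" using lam assms by (simp add: e_def field_simps)
  define C where "C = e / 2 * (1/2) powr \<alpha>"
  have C0: "C > 0" using e0 by (simp add: C_def)
  show "beta_monotone (\<alpha> + 2) (F_map A \<alpha>)" unfolding beta_monotone_def
  proof (intro exI[of _ C] conjI allI C0)
    fix u v :: "real^'n"
    define d where "d = norm (u - v)"
    have d0: "0 \<le> d" by (simp add: d_def)
    have dle: "d \<le> norm u + norm v" unfolding d_def by (rule norm_triangle_ineq4)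
    have m: "(d/2) powr \<alpha> \<le> norm u powr \<alpha> + norm v powr \<alpha>"
    proof (cases "norm v \<le> norm u")
      case True
      hence "d/2 \<le> norm u" using dle by simp
      hence "(d/2) powr \<alpha> \<le> norm u powr \<alpha>" using d0 assms by (intro powr_mono2) auto
      then show ?thesis by (smt (verit) powr_ge_zero)
    next
      case False
      hence "d/2 \<le> norm v" using dle by simp
      hence "(d/2) powr \<alpha> \<le> norm v powr \<alpha>" using d0 assms by (intro powr_mono2) auto
      then show ?thesis by (smt (verit) powr_ge_zero)
    qed
    have WD: "((norm u powr \<alpha>) *\<^sub>R u - (norm v powr \<alpha>) *\<^sub>R v) \<bullet> (u - v) \<ge> (d/2) powr \<alpha> / 2 * d^2"
    proof -
      have "(d/2) powr \<alpha> / 2 * d^2 \<le> (norm u powr \<alpha> + norm v powr \<alpha>)/2 * d^2"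
        using m by (intro mult_right_mono) auto
      then show ?thesis using vec[OF assms, of u v] by (simp add: d_def)
    qed
    have pw: "d powr (\<alpha> + 2) = (d/2) powr \<alpha> * 2 powr \<alpha> * d^2"
    proof -
      have "d powr (\<alpha> + 2) = d powr \<alpha> * d powr 2" by (simp add: powr_add)
      also have "d powr 2 = d^2" using d0 by (cases "d = 0") (simp_all add: powr_realpow)
      also have "d powr \<alpha> = ((d/2) * 2) powr \<alpha>" by simp
      also have "\<dots> = (d/2) powr \<alpha> * 2 powr \<alpha>" by (rule powr_mult)
      finally show ?thesis .
    qed
    have "C * d powr (\<alpha> + 2) = e * ((d/2) powr \<alpha> / 2 * d^2)"
      unfolding pw C_def by (simp add: powr_divide field_simps)
    also have "\<dots> \<le> e * (((norm u powr \<alpha>) *\<^sub>R u - (norm v powr \<alpha>) *\<^sub>R v) \<bullet> (u - v))"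
      using WD e0 by (intro mult_left_mono) auto
    also have "\<dots> \<le> (F_map A \<alpha> u - F_map A \<alpha> v) \<bullet> (u - v)"
      using main_ineq[where A=A and al=\<alpha> and lam=lam and u=u and v=v, OF assms] by (simp add: e_def)
    finally show "C * norm (u - v) powr (\<alpha> + 2) \<le> (F_map A \<alpha> u - F_map A \<alpha> v) \<bullet> (u - v)"
      by (simp add: d_def)
  qed
qed

end
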